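(* Let $k\in\{1,\dots,n\}$, let $\nu$ be an $n$-colorless partition with $\nu_1<n$, and let $\mu$ be a partition with $\mu_1<n$ (so $\nu'_n=\mu'_n=0$). Let $\tau\in\mathfrak S_n$ be the permutation determined by $\tau(\overline{\nu'_j-j+k})=j$ for $1\le j\le n$. For $l=2,\dots,n$ let $\nu_{\ge l}$ be the partition conjugate to $(\nu'_l,\nu'_{l+1},\dots,\nu'_n)$. Consider the finite collection of colored partitions consisting, for each $l=2,\dots,n$, of $\mu'_{l-1}-\mu'_l$ copies of $\nu_{\ge l}$, in which the box $(x,y)$ carries color $\overline{k-l+1+x-y}$. For $j\in\{1,\dots,n\}$, let $\sharp(CC_j)$ (resp. $\sharp(CV_j)$) be the total number, over this collection, of concave (resp. convex) corners of color $j$. Then for all $j\in\{1,\dots,n\}$, $$\sharp(CC_j)-\sharp(CV_j)=\mu'_{\tau(j)}-\mu'_{\tau(j-1)}+\mu'_1\delta_{j,k},$$ where $\tau(0)$ means $\tau(n)$.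
   Context: Fix $n\ge3$. For an integer $a$, $\overline a\in\{1,\dots,n\}$ denotes its representative mod $n$; colors are read mod $n$ in $\{1,\dots,n\}$. A partition $\nu$ is $n$-colorless if, for every residue $i$ mod $n$, the number of boxes $(x,y)$ ($\nu_x\ge y$) with $x-y\equiv i$ is the same. For such $\nu$ with $\nu_1<n$, the integers $\nu'_j-j+k$ ($1\le j\le n$) are pairwise distinct mod $n$, so $\tau$ is well-defined. Corners of a partition $\gamma$ with conjugate $\gamma'$: - $(x,y)\in\mathbb Z_{\ge1}^2$ is a convex corner if $\gamma'_{y+1}<\gamma'_y=x$; - $(x,y)$ is a concave corner if $\gamma'_y=x-1$ and either $y=1$ or $\gamma'_{y-1}>x-1$. The color of a corner $(x,y)$ is the color assigned to position $(x,y)$ by the rule stated in the claim. *)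

theory Defs
  imports Main
begin

text \<open>Partitions are represented as functions p :: nat => nat, where p x is the
  length of row x for x >= 1 (the value at index 0 is irrelevant).\<close>

definition is_partition :: "(nat \<Rightarrow> nat) \<Rightarrow> bool" where
  "is_partition p \<longleftrightarrow> (\<forall>i\<ge>1. p (Suc i) \<le> p i) \<and> (\<exists>N. \<forall>i\<ge>N. p i = 0)"

text \<open>Conjugate partition: column lengths (meaningful for y >= 1).\<close>
definition conj :: "(nat \<Rightarrow> nat) \<Rightarrow> nat \<Rightarrow> nat" where
  "conj p y = card {x. 1 \<le> x \<and> y \<le> p x}"

definition boxes :: "(nat \<Rightarrow> nat) \<Rightarrow> (nat \<times> nat) set" where
  "boxes p = {(x, y). 1 \<le> x \<and> 1 \<le> y \<and> y \<le> p x}"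

definition rep :: "nat \<Rightarrow> int \<Rightarrow> int" where
  "rep n a = (a - 1) mod int n + 1"

definition colorless :: "nat \<Rightarrow> (nat \<Rightarrow> nat) \<Rightarrow> bool" where
  "colorless n p \<longleftrightarrow> (\<forall>i j :: int.
     card {(x, y) \<in> boxes p. (int x - int y) mod int n = i mod int n}
   = card {(x, y) \<in> boxes p. (int x - int y) mod int n = j mod int n})"

definition tau :: "nat \<Rightarrow> nat \<Rightarrow> (nat \<Rightarrow> nat) \<Rightarrow> int \<Rightarrow> nat" where
  "tau n k nu c = (THE j. j \<in> {1..n} \<and> rep n (int (conj nu j) - int j + int k) = c)"

definition trunc_part :: "nat \<Rightarrow> (nat \<Rightarrow> nat) \<Rightarrow> nat \<Rightarrow> (nat \<Rightarrow> nat)" where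
  "trunc_part n nu l = conj (\<lambda>y. if 1 \<le> y \<and> y \<le> n + 1 - l then conj nu (l + y - 1) else 0)"

definition convex_corners :: "(nat \<Rightarrow> nat) \<Rightarrow> (nat \<times> nat) set" where
  "convex_corners g = {(x, y). 1 \<le> x \<and> 1 \<le> y \<and> conj g (y + 1) < conj g y \<and> conj g y = x}"

definition concave_corners :: "(nat \<Rightarrow> nat) \<Rightarrow> (nat \<times> nat) set" where
  "concave_corners g = {(x, y). 1 \<le> x \<and> 1 \<le> y \<and> int (conj g y) = int x - 1 \<and>
       (y = 1 \<or> int (conj g (y - 1)) > int x - 1)}"

definition corner_color :: "nat \<Rightarrow> nat \<Rightarrow> nat \<Rightarrow> nat \<times> nat \<Rightarrow> int" where
  "corner_color n k l xy = rep n (int k - int l + 1 + int (fst xy) - int (snd xy))"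

definition num_CC :: "nat \<Rightarrow> nat \<Rightarrow> (nat \<Rightarrow> nat) \<Rightarrow> (nat \<Rightarrow> nat) \<Rightarrow> int \<Rightarrow> int" where
  "num_CC n k nu mu j = (\<Sum>l = 2..n. (int (conj mu (l - 1)) - int (conj mu l)) *
      int (card {c \<in> concave_corners (trunc_part n nu l). corner_color n k l c = j}))"

definition num_CV :: "nat \<Rightarrow> nat \<Rightarrow> (nat \<Rightarrow> nat) \<Rightarrow> (nat \<Rightarrow> nat) \<Rightarrow> int \<Rightarrow> int" where
  "num_CV n k nu mu j = (\<Sum>l = 2..n. (int (conj mu (l - 1)) - int (conj mu l)) *
      int (card {c \<in> convex_corners (trunc_part n nu l). corner_color n k l c = j}))"

end

theory Submission
  imports Defs
begin


lemma part_dec: assumes "is_partition p" "1 \<le> i" "i \<le> j" shows "p j \<le> p i"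
  using assms(3)
proof (induction j rule: dec_induct)
  case base show ?case by simp
next
  case (step m)
  then have "p (Suc m) \<le> p m" using assms(1,2) unfolding is_partition_def by auto
  then show ?case using step by linarith
qed

lemma part_fin: assumes "is_partition p" "1 \<le> y" shows "finite {x. 1 \<le> x \<and> y \<le> p x}"
proof -
  obtain N where N: "\<forall>i\<ge>N. p i = 0" using assms(1) unfolding is_partition_def by auto
  have "{x. 1 \<le> x \<and> y \<le> p x} \<subseteq> {..<N}"
  proof
    fix x assume "x \<in> {x. 1 \<le> x \<and> y \<le> p x}"
    then show "x \<in> {..<N}" using N assms(2) by (metis le_zero_eq lessThan_iff mem_Collect_eq not_le one_neq_zero)
  qed
  then show ?thesis using finite_subset by blast
qed

lemma down_closed:
  fixes S :: "nat set"
  assumes "finite S" "\<forall>x\<in>S. 1 \<le> x" "\<And>x y. 1 \<le> x \<Longrightarrow> x \<le> y \<Longrightarrow> y \<in> S \<Longrightarrow> x \<in> S"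
  shows "S = {1..card S}"
proof (cases "S = {}")
  case True then show ?thesis by simp
next
  case False
  define m where "m = Max S"
  have mS: "m \<in> S" using False assms(1) m_def by simp
  have "S = {1..m}"
  proof
    show "S \<subseteq> {1..m}" using assms(1,2) m_def by auto
    show "{1..m} \<subseteq> S" using assms(3) mS by auto
  qed
  then show ?thesis by simp
qed

lemma conj_set: assumes "is_partition p" "1 \<le> y" shows "{x. 1 \<le> x \<and> y \<le> p x} = {1..conj p y}"
  unfolding conj_def
proof (rule down_closed)
  show "finite {x. 1 \<le> x \<and> y \<le> p x}" using part_fin assms by blast
  show "\<forall>x\<in>{x. 1 \<le> x \<and> y \<le> p x}. 1 \<le> x" by auto
  fix x z assume "1 \<le> x" "x \<le> z" "z \<in> {x. 1 \<le> x \<and> y \<le> p x}"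
  then show "x \<in> {x. 1 \<le> x \<and> y \<le> p x}" using part_dec[OF assms(1)] by fastforce
qed

lemma conj_iff: assumes "is_partition p" "1 \<le> x" "1 \<le> y" shows "y \<le> p x \<longleftrightarrow> x \<le> conj p y"
proof -
  have "x \<in> {x. 1 \<le> x \<and> y \<le> p x} \<longleftrightarrow> x \<in> {1..conj p y}" using conj_set[OF assms(1,3)] by simp
  then show ?thesis using assms(2) by auto
qed

lemma conj_mono: assumes "is_partition p" "1 \<le> y1" "y1 \<le> y2" shows "conj p y2 \<le> conj p y1"
proof -
  have "{x. 1 \<le> x \<and> y2 \<le> p x} \<subseteq> {x. 1 \<le> x \<and> y1 \<le> p x}" using assms(3) by auto
  then show ?thesis unfolding conj_def using card_mono part_fin[OF assms(1,2)] by blast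
qed

lemma conj_conj: assumes "is_partition p" "1 \<le> y" shows "conj (conj p) y = p y"
proof -
  have "{x. 1 \<le> x \<and> y \<le> conj p x} = {1..p y}"
    using conj_iff[OF assms(1) assms(2)] by auto
  then show ?thesis unfolding conj_def[of "conj p"] by simp
qed

lemma conj_zero: assumes "is_partition p" "p 1 < n" "n \<le> y" shows "conj p y = 0"
proof -
  have "{x. 1 \<le> x \<and> y \<le> p x} = {}"
    using part_dec[OF assms(1), of 1] assms(2,3) by fastforce
  then show ?thesis unfolding conj_def by (metis card.empty)
qed

lemma trunc_conj:
  assumes "is_partition nu" "nu 1 < n" "2 \<le> l" "l \<le> n" "1 \<le> y"
  shows "conj (trunc_part n nu l) y = (if y \<le> n + 1 - l then conj nu (l + y - 1) else 0)"
proof -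
  define f where "f = (\<lambda>y. if 1 \<le> y \<and> y \<le> n + 1 - l then conj nu (l + y - 1) else 0)"
  have "is_partition f"
    unfolding is_partition_def
  proof
    show "\<forall>i\<ge>1. f (Suc i) \<le> f i"
    proof (intro allI impI)
      fix i :: nat assume i: "1 \<le> i"
      show "f (Suc i) \<le> f i"
      proof (cases "Suc i \<le> n + 1 - l")
        case True
        then show ?thesis unfolding f_def using i conj_mono[OF assms(1), of "l + i - 1" "l + Suc i - 1"] assms by auto
      next
        case False then show ?thesis unfolding f_def by auto
      qed
    qed
    show "\<exists>N. \<forall>i\<ge>N. f i = 0" by (rule exI[of _ "n + 2"]) (auto simp: f_def)
  qed
  then have "conj (conj f) y = f y" using conj_conj assms(5) by blast
  moreover have "trunc_part n nu l = conj f" unfolding trunc_part_def f_def by simp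
  ultimately show ?thesis using assms(5) f_def by simp
qed



lemma card_filter_sum: "finite A \<Longrightarrow> int (card {x\<in>A. P x}) = (\<Sum>x\<in>A. if P x then 1 else 0)"
  by (simp add: sum.inter_filter[symmetric])

lemma rep_eq: assumes "0 < n" "1 \<le> j" "j \<le> int n"
  shows "rep n a = j \<longleftrightarrow> a mod int n = j mod int n"
proof -
  have jm: "(j - 1) mod int n = j - 1" using assms by simp
  have "rep n a = j \<longleftrightarrow> (a - 1) mod int n = j - 1" unfolding rep_def by auto
  also have "\<dots> \<longleftrightarrow> (a - 1) mod int n = (j - 1) mod int n" using jm by simp
  also have "\<dots> \<longleftrightarrow> a mod int n = j mod int n" by (simp add: mod_eq_dvd_iff)
  finally show ?thesis .
qed

lemma cnt_diff:
  fixes a i :: int and n c :: nat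
  shows "(\<Sum>x\<in>{1..c}. if (int x - a) mod int n = i mod int n then 1 else 0)
       - (\<Sum>x\<in>{1..c}. if (int x - a) mod int n = (i - 1) mod int n then 1 else 0)
       = (if (1 - a) mod int n = i mod int n then 1 else 0)
       - (if (int c + 1 - a) mod int n = i mod int n then (1::int) else 0)"
proof (induction c)
  case 0 then show ?case by simp
next
  case (Suc c)
  define f1 where "f1 = (\<lambda>x::nat. if (int x - a) mod int n = i mod int n then 1 else (0::int))"
  define f2 where "f2 = (\<lambda>x::nat. if (int x - a) mod int n = (i - 1) mod int n then 1 else (0::int))"
  have s1: "sum f1 {1..Suc c} = sum f1 {1..c} + f1 (Suc c)" by (simp add: sum.cl_ivl_Suc)
  have s2: "sum f2 {1..Suc c} = sum f2 {1..c} + f2 (Suc c)" by (simp add: sum.cl_ivl_Suc)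
  have e1: "(int (Suc c) - a) mod int n = (i - 1) mod int n \<longleftrightarrow> (int (Suc c) + 1 - a) mod int n = i mod int n"
    by (simp add: mod_eq_dvd_iff algebra_simps)
  have e2: "(int (Suc c) - a) = int c + 1 - a" by simp
  have f1s: "f1 (Suc c) = (if (int c + 1 - a) mod int n = i mod int n then 1 else 0)"
    unfolding f1_def by (simp add: ac_simps)
  have f2s: "f2 (Suc c) = (if (int (Suc c) + 1 - a) mod int n = i mod int n then 1 else 0)"
    unfolding f2_def using e1 by simp
  have IH: "sum f1 {1..c} - sum f2 {1..c} = (if (1 - a) mod int n = i mod int n then 1 else 0)
       - (if (int c + 1 - a) mod int n = i mod int n then (1::int) else 0)"
    using Suc unfolding f1_def f2_def by simp
  have "sum f1 {1..Suc c} - sum f2 {1..Suc c} = (if (1 - a) mod int n = i mod int n then 1 else 0)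
       - (if (int (Suc c) + 1 - a) mod int n = i mod int n then (1::int) else 0)"
    using s1 s2 IH f1s f2s by simp
  then show ?case unfolding f1_def f2_def .
qed

lemma unique_res:
  assumes "0 < n" "y1 \<in> {1..n}" "y2 \<in> {1..n}" "(int y1) mod int n = (int y2) mod int n"
  shows "y1 = y2"
proof (rule ccontr)
  assume ne: "y1 \<noteq> y2"
  have "int n dvd int y1 - int y2" using assms(4) by (simp add: mod_eq_dvd_iff)
  moreover have "int y1 - int y2 \<noteq> 0" using ne by simp
  ultimately have "\<bar>int n\<bar> \<le> \<bar>int y1 - int y2\<bar>" using dvd_imp_le_int by blast
  then show False using assms(2,3) by auto
qed



lemma box_count:
  assumes "is_partition nu" "nu 1 < n"
  shows "int (card {(x,y)\<in>boxes nu. (int x - int y) mod int n = i mod int n})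
    = (\<Sum>y\<in>{1..n}. \<Sum>x\<in>{1..conj nu y}. if (int x - int y) mod int n = i mod int n then 1 else 0)"
proof -
  define P where "P = (\<lambda>x y. (int x - int y) mod int n = i mod int n)"
  have eq: "{(x,y)\<in>boxes nu. P x y} = (\<lambda>(y,x). (x,y)) ` (SIGMA y:{1..n}. {x\<in>{1..conj nu y}. P x y})"
  proof (rule set_eqI, rule iffI)
    fix z assume "z \<in> {(x,y)\<in>boxes nu. P x y}"
    then obtain x y where z: "z = (x,y)" "1 \<le> x" "1 \<le> y" "y \<le> nu x" "P x y" unfolding boxes_def by auto
    have "nu x \<le> nu 1" using part_dec[OF assms(1)] z by simp
    then have "y \<le> n" using z assms(2) by simp
    moreover have "x \<le> conj nu y" using conj_iff[OF assms(1) z(2) z(3)] z by simp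
    ultimately have "(y,x) \<in> (SIGMA y:{1..n}. {x\<in>{1..conj nu y}. P x y})" using z by auto
    then show "z \<in> (\<lambda>(y,x). (x,y)) ` (SIGMA y:{1..n}. {x\<in>{1..conj nu y}. P x y})"
      using z(1) by (intro rev_image_eqI[of "(y,x)"]) auto
  next
    fix z assume "z \<in> (\<lambda>(y,x). (x,y)) ` (SIGMA y:{1..n}. {x\<in>{1..conj nu y}. P x y})"
    then obtain x y where z: "z = (x,y)" "1 \<le> x" "1 \<le> y" "y \<le> n" "x \<le> conj nu y" "P x y" by auto
    have "y \<le> nu x" using conj_iff[OF assms(1) z(2) z(3)] z by simp
    then show "z \<in> {(x,y)\<in>boxes nu. P x y}" using z unfolding boxes_def by auto
  qed
  have "inj_on (\<lambda>(y,x). (x::nat,y::nat)) (SIGMA y:{1..n}. {x\<in>{1..conj nu y}. P x y})"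
    by (auto simp: inj_on_def)
  then have "card ((\<lambda>(y,x). (x,y)) ` (SIGMA y:{1..n}. {x\<in>{1..conj nu y}. P x y})) = card (SIGMA y:{1..n}. {x\<in>{1..conj nu y}. P x y})"
    by (rule card_image)
  then have "card {(x,y)\<in>boxes nu. P x y} = card (SIGMA y:{1..n}. {x\<in>{1..conj nu y}. P x y})"
    unfolding eq .
  also have "\<dots> = (\<Sum>y\<in>{1..n}. card {x\<in>{1..conj nu y}. P x y})"
    by (rule card_SigmaI) auto
  finally have "int (card {(x,y)\<in>boxes nu. P x y}) = (\<Sum>y\<in>{1..n}. int (card {x\<in>{1..conj nu y}. P x y}))"
    by simp
  also have "\<dots> = (\<Sum>y\<in>{1..n}. \<Sum>x\<in>{1..conj nu y}. if P x y then 1 else 0)"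
    by (rule sum.cong[OF refl]) (rule card_filter_sum, simp)
  finally show ?thesis unfolding P_def .
qed

lemma sum_one:
  assumes "0 < n"
  shows "(\<Sum>y\<in>{1..n}. if (1 - int y) mod int n = i mod int n then 1 else 0) = (1::int)"
proof -
  define y0 where "y0 = nat ((- i) mod int n) + 1"
  have r: "0 \<le> (- i) mod int n" "(- i) mod int n < int n" using assms by auto
  have y0n: "y0 \<in> {1..n}" using r unfolding y0_def by auto
  have y0P: "(1 - int y0) mod int n = i mod int n"
  proof -
    have "1 - int y0 = - ((- i) mod int n)" using r unfolding y0_def by simp
    then show ?thesis by (simp add: mod_minus_eq)
  qed
  have "{y\<in>{1..n}. (1 - int y) mod int n = i mod int n} = {y0}"
  proof
    show "{y0} \<subseteq> {y\<in>{1..n}. (1 - int y) mod int n = i mod int n}" using y0n y0P by auto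
    show "{y\<in>{1..n}. (1 - int y) mod int n = i mod int n} \<subseteq> {y0}"
    proof
      fix y assume y: "y \<in> {y\<in>{1..n}. (1 - int y) mod int n = i mod int n}"
      then have "(1 - int y) mod int n = (1 - int y0) mod int n" using y0P by simp
      then have "int y mod int n = int y0 mod int n" by (simp add: mod_eq_dvd_iff dvd_diff_commute)
      then have "y = y0" using unique_res[OF assms] y y0n by blast
      then show "y \<in> {y0}" by simp
    qed
  qed
  then have "int (card {y\<in>{1..n}. (1 - int y) mod int n = i mod int n}) = 1" by simp
  then show ?thesis by (metis (no_types) card_filter_sum finite_atLeastAtMost)
qed

lemma colorless_one:
  assumes "is_partition nu" "nu 1 < n" "colorless n nu" "0 < n"
  shows "(\<Sum>y\<in>{1..n}. if (int (conj nu y) + 1 - int y) mod int n = i mod int n then 1 else 0) = (1::int)"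
proof -
  have "card {(x,y)\<in>boxes nu. (int x - int y) mod int n = i mod int n}
      = card {(x,y)\<in>boxes nu. (int x - int y) mod int n = (i - 1) mod int n}"
    using assms(3) unfolding colorless_def by blast
  then have "0 = (\<Sum>y\<in>{1..n}. \<Sum>x\<in>{1..conj nu y}. if (int x - int y) mod int n = i mod int n then 1 else 0)
     - (\<Sum>y\<in>{1..n}. \<Sum>x\<in>{1..conj nu y}. if (int x - int y) mod int n = (i - 1) mod int n then 1 else (0::int))"
    using box_count[OF assms(1,2), of i] box_count[OF assms(1,2), of "i - 1"] by simp
  also have "\<dots> = (\<Sum>y\<in>{1..n}. (\<Sum>x\<in>{1..conj nu y}. if (int x - int y) mod int n = i mod int n then 1 else 0)
     - (\<Sum>x\<in>{1..conj nu y}. if (int x - int y) mod int n = (i - 1) mod int n then 1 else (0::int)))"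
    by (simp add: sum_subtractf)
  also have "\<dots> = (\<Sum>y\<in>{1..n}. (if (1 - int y) mod int n = i mod int n then 1 else 0)
       - (if (int (conj nu y) + 1 - int y) mod int n = i mod int n then (1::int) else 0))"
    by (rule sum.cong[OF refl]) (rule cnt_diff)
  also have "\<dots> = 1 - (\<Sum>y\<in>{1..n}. if (int (conj nu y) + 1 - int y) mod int n = i mod int n then 1 else 0)"
    using sum_one[OF assms(4), of i] by (simp add: sum_subtractf)
  finally show ?thesis by simp
qed

lemma tau_prop:
  assumes "is_partition nu" "nu 1 < n" "colorless n nu" "0 < n" "1 \<le> j" "j \<le> int n"
  shows "tau n k nu j \<in> {1..n}"
    "\<And>m. m \<in> {1..n} \<Longrightarrow> rep n (int (conj nu m) - int m + int k) = j \<longleftrightarrow> m = tau n k nu j"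
proof -
  have eqv: "rep n (int (conj nu m) - int m + int k) = j \<longleftrightarrow>
      (int (conj nu m) + 1 - int m) mod int n = (j - int k + 1) mod int n" for m
  proof -
    have "rep n (int (conj nu m) - int m + int k) = j \<longleftrightarrow> (int (conj nu m) - int m + int k) mod int n = j mod int n"
      using rep_eq[OF assms(4,5,6)] by blast
    also have "\<dots> \<longleftrightarrow> (int (conj nu m) + 1 - int m) mod int n = (j - int k + 1) mod int n"
      by (simp add: mod_eq_dvd_iff algebra_simps)
    finally show ?thesis .
  qed
  define S where "S = {m\<in>{1..n}. rep n (int (conj nu m) - int m + int k) = j}"
  have "int (card S) = (\<Sum>m\<in>{1..n}. if (int (conj nu m) + 1 - int m) mod int n = (j - int k + 1) mod int n then 1 else 0)"
  proof -
    have "S = {m\<in>{1..n}. (int (conj nu m) + 1 - int m) mod int n = (j - int k + 1) mod int n}"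
      unfolding S_def using eqv by auto
    then show ?thesis by (metis (no_types) card_filter_sum finite_atLeastAtMost)
  qed
  also have "\<dots> = 1" using colorless_one[OF assms(1-4)] by blast
  finally have "card S = 1" by simp
  then obtain t where St: "S = {t}" using card_1_singletonE by blast
  have tS: "t \<in> {1..n} \<and> rep n (int (conj nu t) - int t + int k) = j" using St unfolding S_def by blast
  have "tau n k nu j = t"
    unfolding tau_def
  proof (rule the_equality)
    show "t \<in> {1..n} \<and> rep n (int (conj nu t) - int t + int k) = j" by (rule tS)
    fix m assume "m \<in> {1..n} \<and> rep n (int (conj nu m) - int m + int k) = j"
    then have "m \<in> S" unfolding S_def by blast
    then show "m = t" using St by blast
  qed
  then show "tau n k nu j \<in> {1..n}" using tS by simp
  fix m assume m: "m \<in> {1..n}"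
  show "rep n (int (conj nu m) - int m + int k) = j \<longleftrightarrow> m = tau n k nu j"
  proof
    assume "rep n (int (conj nu m) - int m + int k) = j"
    then have "m \<in> S" using m unfolding S_def by blast
    then show "m = tau n k nu j" using St \<open>tau n k nu j = t\<close> by blast
  next
    assume "m = tau n k nu j"
    then show "rep n (int (conj nu m) - int m + int k) = j" using tS \<open>tau n k nu j = t\<close> by simp
  qed
qed



lemma CC_card:
  assumes nu: "is_partition nu" "nu 1 < n" and l: "2 \<le> l" "l \<le> n"
  shows "card {cc \<in> concave_corners (trunc_part n nu l). corner_color n k l cc = j}
       = card {m\<in>{l..n}. (m = l \<or> conj nu m < conj nu (m - 1)) \<and> rep n (int (conj nu m) - int m + int k + 1) = j}"
proof -
  define c where "c = conj nu"
  define G where "G = conj (trunc_part n nu l)"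
  have G: "\<And>y. 1 \<le> y \<Longrightarrow> G y = (if y \<le> n + 1 - l then c (l + y - 1) else 0)"
    unfolding G_def c_def using trunc_conj[OF nu l] by blast
  have cn: "c n = 0" unfolding c_def using conj_zero[OF nu] by blast
  define M where "M = {m\<in>{l..n}. (m = l \<or> c m < c (m - 1)) \<and> rep n (int (c m) - int m + int k + 1) = j}"
  define h where "h = (\<lambda>m. (c m + 1, m + 1 - l))"
  have eq: "{cc \<in> concave_corners (trunc_part n nu l). corner_color n k l cc = j} = h ` M"
  proof (rule set_eqI, rule iffI)
    fix z assume "z \<in> {cc \<in> concave_corners (trunc_part n nu l). corner_color n k l cc = j}"
    then obtain x y where z: "z = (x,y)" "1 \<le> x" "1 \<le> y" "int (G y) = int x - 1"
      "y = 1 \<or> int (G (y - 1)) > int x - 1" "rep n (int k - int l + 1 + int x - int y) = j"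
      unfolding concave_corners_def corner_color_def G_def by auto
    show "z \<in> h ` M"
    proof (cases "y \<le> n + 1 - l")
      case True
      define m where "m = l + y - 1"
      have Gy: "G y = c m" using G z True m_def by simp
      have x: "x = c m + 1" using Gy z by simp
      have y: "y = m + 1 - l" using m_def z by simp
      have mr: "m \<in> {l..n}" using m_def True z l by auto
      have cond: "m = l \<or> c m < c (m - 1)"
      proof (cases "y = 1")
        case True then show ?thesis using m_def by simp
      next
        case False
        have a: "1 \<le> y - 1" "y - 1 \<le> n + 1 - l" using False z(3) \<open>y \<le> n + 1 - l\<close> by auto
        have "G (y - 1) = c (l + (y - 1) - 1)" using G[OF a(1)] a(2) by simp
        also have "l + (y - 1) - 1 = m - 1" using m_def a(1) by simp
        finally have "G (y - 1) = c (m - 1)" .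
        then show ?thesis using z(5) False x by simp
      qed
      have col: "int k - int l + 1 + int x - int y = int (c m) - int m + int k + 1"
        using x y mr by simp
      have "m \<in> M" unfolding M_def using mr cond z(6)[unfolded col] by simp
      then show ?thesis using z x y h_def by auto
    next
      case False
      then have "G y = 0" using G z by simp
      then have x1: "x = 1" using z by simp
      have y2: "y \<noteq> 1" using False l by auto
      then have pos: "G (y - 1) > 0" using z(5) x1 by simp
      show ?thesis
      proof (cases "y - 1 \<le> n + 1 - l")
        case True
        then have "y - 1 = n + 1 - l" using False by simp
        then have "G (y - 1) = c n" using G[of "y - 1"] y2 z(3) l by simp
        then show ?thesis using pos cn by simp
      next
        case False
        then have "G (y - 1) = 0" using G[of "y - 1"] y2 z(3) by simp
        then show ?thesis using pos by simp
      qed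
    qed
  next
    fix z assume "z \<in> h ` M"
    then obtain m where m: "z = h m" "m \<in> {l..n}" "m = l \<or> c m < c (m - 1)"
       "rep n (int (c m) - int m + int k + 1) = j" unfolding M_def by auto
    define y where "y = m + 1 - l"
    have y1: "1 \<le> y" "y \<le> n + 1 - l" using m(2) y_def by auto
    have Gy: "G y = c m" using G y1 y_def m(2) by simp
    have cond: "y = 1 \<or> G (y - 1) > G y"
    proof (cases "m = l")
      case True then show ?thesis using y_def by simp
    next
      case False
      then have "G (y - 1) = c (m - 1)" using G[of "y - 1"] y_def m(2) l by auto
      then show ?thesis using m(3) False Gy by simp
    qed
    have col: "int k - int l + 1 + int (c m + 1) - int y = int (c m) - int m + int k + 1"
      using y_def m(2) by simp
    have colr: "corner_color n k l (c m + 1, y) = j"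
      unfolding corner_color_def using m(4) by (simp only: fst_conv snd_conv col)
    have cc: "(c m + 1, y) \<in> concave_corners (trunc_part n nu l)"
      unfolding concave_corners_def G_def[symmetric] using y1 Gy cond by auto
    have "z = (c m + 1, y)" using m(1) h_def y_def by simp
    then show "z \<in> {cc \<in> concave_corners (trunc_part n nu l). corner_color n k l cc = j}"
      using colr cc by simp
  qed
  have "inj_on h M" unfolding h_def M_def inj_on_def by auto
  then have "card (h ` M) = card M" by (rule card_image)
  then show ?thesis using eq unfolding M_def c_def by simp
qed

lemma CV_card:
  assumes nu: "is_partition nu" "nu 1 < n" and l: "2 \<le> l" "l \<le> n"
  shows "card {cc \<in> convex_corners (trunc_part n nu l). corner_color n k l cc = j}
       = card {m\<in>{l..n-1}. conj nu (m + 1) < conj nu m \<and> rep n (int (conj nu m) - int m + int k) = j}"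
proof -
  define c where "c = conj nu"
  define G where "G = conj (trunc_part n nu l)"
  have G: "\<And>y. 1 \<le> y \<Longrightarrow> G y = (if y \<le> n + 1 - l then c (l + y - 1) else 0)"
    unfolding G_def c_def using trunc_conj[OF nu l] by blast
  have cn: "c n = 0" unfolding c_def using conj_zero[OF nu] by blast
  define M where "M = {m\<in>{l..n-1}. c (m + 1) < c m \<and> rep n (int (c m) - int m + int k) = j}"
  define h where "h = (\<lambda>m. (c m, m + 1 - l))"
  have eq: "{cc \<in> convex_corners (trunc_part n nu l). corner_color n k l cc = j} = h ` M"
  proof (rule set_eqI, rule iffI)
    fix z assume "z \<in> {cc \<in> convex_corners (trunc_part n nu l). corner_color n k l cc = j}"
    then obtain x y where z: "z = (x,y)" "1 \<le> x" "1 \<le> y" "G (y + 1) < G y" "G y = x"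
      "rep n (int k - int l + 1 + int x - int y) = j"
      unfolding convex_corners_def corner_color_def G_def by auto
    have yle: "y \<le> n + 1 - l"
    proof (rule ccontr)
      assume "\<not> y \<le> n + 1 - l"
      then have "G y = 0" using G z(3) by simp
      then show False using z by simp
    qed
    have yne: "y \<noteq> n + 1 - l"
    proof
      assume "y = n + 1 - l"
      then have "G y = c n" using G z(3) l by simp
      then show False using z cn by simp
    qed
    define m where "m = l + y - 1"
    have Gy: "G y = c m" using G z(3) yle m_def by simp
    have Gy1: "G (y + 1) = c (m + 1)" using G[of "y + 1"] yle yne m_def z(3) by simp
    have x: "x = c m" using Gy z by simp
    have y: "y = m + 1 - l" using m_def z by simp
    have mr: "m \<in> {l..n-1}" using m_def yle yne z l by auto
    have col: "int k - int l + 1 + int x - int y = int (c m) - int m + int k"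
      using x y mr by simp
    have "m \<in> M" unfolding M_def using mr z(4) Gy Gy1 z(6)[unfolded col] by simp
    then show "z \<in> h ` M" using z x y h_def by auto
  next
    fix z assume "z \<in> h ` M"
    then obtain m where m: "z = h m" "m \<in> {l..n-1}" "c (m + 1) < c m"
       "rep n (int (c m) - int m + int k) = j" unfolding M_def by auto
    define y where "y = m + 1 - l"
    have y1: "1 \<le> y" "y + 1 \<le> n + 1 - l" using m(2) y_def l by auto
    have Gy: "G y = c m" using G y1 y_def m(2) by simp
    have Gy1: "G (y + 1) = c (m + 1)" using G[of "y + 1"] y1 y_def m(2) by simp
    have col: "int k - int l + 1 + int (c m) - int y = int (c m) - int m + int k"
      using y_def m(2) by simp
    have colr: "corner_color n k l (c m, y) = j"
      unfolding corner_color_def using m(4) by (simp only: fst_conv snd_conv col)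
    have cc: "(c m, y) \<in> convex_corners (trunc_part n nu l)"
      unfolding convex_corners_def G_def[symmetric] using y1 Gy Gy1 m(3) by auto
    have "z = (c m, y)" using m(1) h_def y_def by simp
    then show "z \<in> {cc \<in> convex_corners (trunc_part n nu l). corner_color n k l cc = j}"
      using colr cc by simp
  qed
  have "inj_on h M" unfolding h_def M_def inj_on_def by auto
  then have "card (h ` M) = card M" by (rule card_image)
  then show ?thesis using eq unfolding M_def c_def by simp
qed



lemma telesc:
  fixes c :: "nat \<Rightarrow> nat" and A B :: "nat \<Rightarrow> int"
  assumes mono: "\<And>m. l \<le> m \<Longrightarrow> c (m + 1) \<le> c m"
    and eqAB: "\<And>m. c (m + 1) = c m \<Longrightarrow> A (m + 1) = B m"
    and l: "1 \<le> l" "l \<le> n"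
  shows "(\<Sum>m\<in>{l..n}. if m = l \<or> c m < c (m - 1) then A m else 0)
       - (\<Sum>m\<in>{l..n-1}. if c (m + 1) < c m then B m else 0)
       = (\<Sum>m\<in>{l..n}. A m) - (\<Sum>m\<in>{l..n-1}. B m)"
  using l(2)
proof (induction n rule: nat_induct_at_least)
  case base
  have "{l..l-1} = {}" using l by auto
  then show ?case by simp
next
  case (Suc n)
  have s1: "(\<Sum>m\<in>{l..Suc n}. if m = l \<or> c m < c (m - 1) then A m else 0)
     = (\<Sum>m\<in>{l..n}. if m = l \<or> c m < c (m - 1) then A m else 0) + (if c (n + 1) < c n then A (n + 1) else 0)"
    using Suc.hyps l by (simp add: sum.cl_ivl_Suc)
  have s2: "(\<Sum>m\<in>{l..Suc n}. A m) = (\<Sum>m\<in>{l..n}. A m) + A (n + 1)"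
    using Suc.hyps by (simp add: sum.cl_ivl_Suc)
  obtain p where p: "n = Suc p" using Suc.hyps l by (cases n) auto
  have lp: "l \<le> Suc p" using Suc.hyps p by simp
  have s3: "(\<Sum>m\<in>{l..Suc n - 1}. if c (m + 1) < c m then B m else 0)
     = (\<Sum>m\<in>{l..n-1}. if c (m + 1) < c m then B m else 0) + (if c (n + 1) < c n then B n else 0)"
    unfolding p using lp by (simp add: sum.cl_ivl_Suc)
  have s4: "(\<Sum>m\<in>{l..Suc n - 1}. B m) = (\<Sum>m\<in>{l..n-1}. B m) + B n"
    unfolding p using lp by (simp add: sum.cl_ivl_Suc)
  have key: "(if c (n + 1) < c n then A (n + 1) else 0) - (if c (n + 1) < c n then B n else 0) = A (n + 1) - B n"
    using mono[OF Suc.hyps] eqAB[of n] by force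
  show ?case using s1 s2 s3 s4 key Suc.IH by simp
qed

lemma tele_mu:
  fixes f :: "nat \<Rightarrow> int"
  assumes "1 \<le> t" "t \<le> n"
  shows "(\<Sum>l\<in>{2..n}. (f (l - 1) - f l) * (if l \<le> t then 1 else 0)) = f 1 - f t"
proof -
  have "(\<Sum>l\<in>{2..n}. (f (l - 1) - f l) * (if l \<le> t then 1 else 0))
      = (\<Sum>l\<in>{2..n}. if l \<le> t then f (l - 1) - f l else 0)"
    by (rule sum.cong) auto
  also have "\<dots> = (\<Sum>l\<in>{l\<in>{2..n}. l \<le> t}. f (l - 1) - f l)"
    by (rule sum.inter_filter[symmetric]) simp
  also have "{l\<in>{2..n}. l \<le> t} = {2..t}" using assms by auto
  also have "(\<Sum>l\<in>{2..t}. f (l - 1) - f l) = f 1 - f t"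
    using assms(1)
  proof (induction t rule: nat_induct_at_least)
    case base then show ?case by simp
  next
    case (Suc t)
    then show ?case by (simp add: sum.cl_ivl_Suc)
  qed
  finally show ?thesis .
qed

lemma rep_pred:
  assumes "0 < n" "1 \<le> j" "j \<le> n"
  shows "rep n (x + 1) = int j \<longleftrightarrow> rep n x = (if j = 1 then int n else int j - 1)"
proof -
  have jm: "1 \<le> (if j = 1 then int n else int j - 1)" "(if j = 1 then int n else int j - 1) \<le> int n"
    using assms by auto
  have "rep n (x + 1) = int j \<longleftrightarrow> (x + 1) mod int n = int j mod int n"
    using rep_eq[of n "int j"] assms by simp
  also have "\<dots> \<longleftrightarrow> x mod int n = (if j = 1 then int n else int j - 1) mod int n"
    by (auto simp: mod_eq_dvd_iff algebra_simps)
  also have "\<dots> \<longleftrightarrow> rep n x = (if j = 1 then int n else int j - 1)"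
    using rep_eq[OF assms(1) jm] by simp
  finally show ?thesis .
qed



lemma per_l:
  assumes nu: "is_partition nu" "nu 1 < n" "colorless n nu" "3 \<le> n"
    and l: "2 \<le> l" "l \<le> n" and j: "1 \<le> j" "j \<le> n"
  shows "int (card {cc \<in> concave_corners (trunc_part n nu l). corner_color n k l cc = int j})
       - int (card {cc \<in> convex_corners (trunc_part n nu l). corner_color n k l cc = int j})
     = (if l \<le> tau n k nu (if j = 1 then int n else int j - 1) then 1 else 0)
       - (if l \<le> tau n k nu (int j) \<and> tau n k nu (int j) \<le> n - 1 then 1 else 0)"
proof -
  define c where "c = conj nu"
  define JM where "JM = (if j = 1 then int n else int j - 1)"
  define A where "A = (\<lambda>m. if rep n (int (c m) - int m + int k + 1) = int j then 1 else (0::int))"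
  define B where "B = (\<lambda>m. if rep n (int (c m) - int m + int k) = int j then 1 else (0::int))"
  have n0: "0 < n" using nu by simp
  have JM: "1 \<le> JM" "JM \<le> int n" unfolding JM_def using j by auto
  have CC: "int (card {cc \<in> concave_corners (trunc_part n nu l). corner_color n k l cc = int j})
      = (\<Sum>m\<in>{l..n}. if m = l \<or> c m < c (m - 1) then A m else 0)"
  proof -
    have "int (card {cc \<in> concave_corners (trunc_part n nu l). corner_color n k l cc = int j})
      = int (card {m\<in>{l..n}. (m = l \<or> c m < c (m - 1)) \<and> rep n (int (c m) - int m + int k + 1) = int j})"
      using CC_card[OF nu(1,2) l] unfolding c_def by simp
    also have "\<dots> = (\<Sum>m\<in>{l..n}. if (m = l \<or> c m < c (m - 1)) \<and> rep n (int (c m) - int m + int k + 1) = int j then 1 else 0)"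
      by (rule card_filter_sum) simp
    also have "\<dots> = (\<Sum>m\<in>{l..n}. if m = l \<or> c m < c (m - 1) then A m else 0)"
      by (rule sum.cong[OF refl]) (simp add: A_def)
    finally show ?thesis .
  qed
  have CV: "int (card {cc \<in> convex_corners (trunc_part n nu l). corner_color n k l cc = int j})
      = (\<Sum>m\<in>{l..n-1}. if c (m + 1) < c m then B m else 0)"
  proof -
    have "int (card {cc \<in> convex_corners (trunc_part n nu l). corner_color n k l cc = int j})
      = int (card {m\<in>{l..n-1}. c (m + 1) < c m \<and> rep n (int (c m) - int m + int k) = int j})"
      using CV_card[OF nu(1,2) l] unfolding c_def by simp
    also have "\<dots> = (\<Sum>m\<in>{l..n-1}. if c (m + 1) < c m \<and> rep n (int (c m) - int m + int k) = int j then 1 else 0)"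
      by (rule card_filter_sum) simp
    also have "\<dots> = (\<Sum>m\<in>{l..n-1}. if c (m + 1) < c m then B m else 0)"
      by (rule sum.cong[OF refl]) (simp add: B_def)
    finally show ?thesis .
  qed
  have mono: "\<And>m. l \<le> m \<Longrightarrow> c (m + 1) \<le> c m"
    unfolding c_def using conj_mono[OF nu(1)] l by simp
  have eqAB: "\<And>m. c (m + 1) = c m \<Longrightarrow> A (m + 1) = B m"
  proof -
    fix m assume h: "c (m + 1) = c m"
    have e: "int (c (m + 1)) - int (m + 1) + int k + 1 = int (c m) - int m + int k" using h by simp
    show "A (m + 1) = B m" unfolding A_def B_def e by (rule refl)
  qed
  have T: "(\<Sum>m\<in>{l..n}. if m = l \<or> c m < c (m - 1) then A m else 0)
       - (\<Sum>m\<in>{l..n-1}. if c (m + 1) < c m then B m else 0)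
       = (\<Sum>m\<in>{l..n}. A m) - (\<Sum>m\<in>{l..n-1}. B m)"
    by (rule telesc[where c=c and A=A and B=B and l=l and n=n, OF mono eqAB]) (use l in auto)
  have tA: "tau n k nu JM \<in> {1..n}" and tA2: "\<And>m. m \<in> {1..n} \<Longrightarrow> rep n (int (conj nu m) - int m + int k) = JM \<longleftrightarrow> m = tau n k nu JM"
    using tau_prop[OF nu(1,2,3) n0 JM] by auto
  have tB: "tau n k nu (int j) \<in> {1..n}" and tB2: "\<And>m. m \<in> {1..n} \<Longrightarrow> rep n (int (conj nu m) - int m + int k) = int j \<longleftrightarrow> m = tau n k nu (int j)"
    using tau_prop[OF nu(1,2,3) n0, of "int j"] j by auto
  have SA: "(\<Sum>m\<in>{l..n}. A m) = (\<Sum>m\<in>{l..n}. if m = tau n k nu JM then 1 else 0)"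
  proof (rule sum.cong[OF refl])
    fix m assume m: "m \<in> {l..n}"
    then have m1: "m \<in> {1..n}" using l by auto
    have "rep n (int (c m) - int m + int k + 1) = int j \<longleftrightarrow> rep n (int (c m) - int m + int k) = JM"
      unfolding JM_def using rep_pred[OF n0 j] by blast
    then show "A m = (if m = tau n k nu JM then 1 else 0)"
      unfolding A_def using tA2[OF m1] unfolding c_def by simp
  qed
  have SB: "(\<Sum>m\<in>{l..n-1}. B m) = (\<Sum>m\<in>{l..n-1}. if m = tau n k nu (int j) then 1 else 0)"
  proof (rule sum.cong[OF refl])
    fix m assume m: "m \<in> {l..n-1}"
    then have m1: "m \<in> {1..n}" using l by auto
    show "B m = (if m = tau n k nu (int j) then 1 else 0)"
      unfolding B_def using tB2[OF m1] unfolding c_def by simp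
  qed
  have SA2: "(\<Sum>m\<in>{l..n}. if m = tau n k nu JM then 1 else (0::int)) = (if l \<le> tau n k nu JM then 1 else 0)"
    using tA by (simp add: sum.delta)
  have SB2: "(\<Sum>m\<in>{l..n-1}. if m = tau n k nu (int j) then 1 else (0::int))
      = (if l \<le> tau n k nu (int j) \<and> tau n k nu (int j) \<le> n - 1 then 1 else 0)"
    by (simp add: sum.delta)
  show ?thesis using CC CV T SA SB SA2 SB2 unfolding JM_def by simp
qed



theorem mainTheorem14:
  fixes n k :: nat and nu mu :: "nat \<Rightarrow> nat"
  assumes "n \<ge> 3" and "k \<in> {1..n}"
    and "is_partition nu" and "colorless n nu" and "nu 1 < n"
    and "is_partition mu" and "mu 1 < n"
  shows "\<forall>j \<in> {1..n}.
    num_CC n k nu mu (int j) - num_CV n k nu mu (int j)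
    = int (conj mu (tau n k nu (int j))) - int (conj mu (tau n k nu (if j = 1 then int n else int j - 1)))
      + (if j = k then int (conj mu 1) else 0)"
proof
  fix j assume jr: "j \<in> {1..n}"
  then have j: "1 \<le> j" "j \<le> n" by auto
  have n0: "0 < n" using assms(1) by simp
  define JM where "JM = (if j = 1 then int n else int j - 1)"
  have JM: "1 \<le> JM" "JM \<le> int n" unfolding JM_def using j by auto
  define a where "a = tau n k nu JM"
  define b where "b = tau n k nu (int j)"
  define w where "w = (\<lambda>l. int (conj mu (l - 1)) - int (conj mu l))"
  have a: "a \<in> {1..n}" unfolding a_def using tau_prop(1)[OF assms(3,5,4) n0 JM] .
  have b: "b \<in> {1..n}" unfolding b_def using tau_prop(1)[OF assms(3,5,4) n0, of "int j"] j by simp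
  have b2: "\<And>m. m \<in> {1..n} \<Longrightarrow> rep n (int (conj nu m) - int m + int k) = int j \<longleftrightarrow> m = b"
    unfolding b_def using tau_prop(2)[OF assms(3,5,4) n0, of "int j"] j by simp
  have mun: "conj mu n = 0" using conj_zero[OF assms(6,7)] by simp
  have nun: "conj nu n = 0" using conj_zero[OF assms(3,5)] by simp
  have repk: "rep n (int (conj nu n) - int n + int k) = int k"
  proof -
    have "(int (conj nu n) - int n + int k) mod int n = int k mod int n" using nun by simp
    then show ?thesis using rep_eq[OF n0, of "int k"] assms(2) by simp
  qed
  have bn: "b = n \<longleftrightarrow> j = k"
  proof -
    have "b = n \<longleftrightarrow> rep n (int (conj nu n) - int n + int k) = int j" using b2[of n] n0 by auto
    then show ?thesis using repk by auto
  qed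
  have "num_CC n k nu mu (int j) - num_CV n k nu mu (int j)
      = (\<Sum>l\<in>{2..n}. w l * (int (card {cc \<in> concave_corners (trunc_part n nu l). corner_color n k l cc = int j})
          - int (card {cc \<in> convex_corners (trunc_part n nu l). corner_color n k l cc = int j})))"
    unfolding num_CC_def num_CV_def w_def by (simp add: sum_subtractf right_diff_distrib)
  also have "\<dots> = (\<Sum>l\<in>{2..n}. w l * ((if l \<le> a then 1 else 0) - (if l \<le> b \<and> b \<le> n - 1 then 1 else 0)))"
  proof (rule sum.cong[OF refl])
    fix l assume "l \<in> {2..n}"
    then have l: "2 \<le> l" "l \<le> n" by auto
    show "w l * (int (card {cc \<in> concave_corners (trunc_part n nu l). corner_color n k l cc = int j})
          - int (card {cc \<in> convex_corners (trunc_part n nu l). corner_color n k l cc = int j}))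
        = w l * ((if l \<le> a then 1 else 0) - (if l \<le> b \<and> b \<le> n - 1 then 1 else 0))"
      using per_l[OF assms(3,5,4,1) l j, of k] unfolding a_def b_def JM_def by simp
  qed
  also have "\<dots> = (\<Sum>l\<in>{2..n}. w l * (if l \<le> a then 1 else 0))
      - (if b \<le> n - 1 then (\<Sum>l\<in>{2..n}. w l * (if l \<le> b then 1 else 0)) else 0)"
    by (auto simp: sum_subtractf right_diff_distrib)
  also have "(\<Sum>l\<in>{2..n}. w l * (if l \<le> a then 1 else 0)) = int (conj mu 1) - int (conj mu a)"
    unfolding w_def using tele_mu[of a n "\<lambda>l. int (conj mu l)"] a by simp
  also have "(\<Sum>l\<in>{2..n}. w l * (if l \<le> b then 1 else 0)) = int (conj mu 1) - int (conj mu b)"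
    unfolding w_def using tele_mu[of b n "\<lambda>l. int (conj mu l)"] b by simp
  finally have main: "num_CC n k nu mu (int j) - num_CV n k nu mu (int j) =
      int (conj mu 1) - int (conj mu a) - (if b \<le> n - 1 then int (conj mu 1) - int (conj mu b) else 0)" .
  show "num_CC n k nu mu (int j) - num_CV n k nu mu (int j)
    = int (conj mu (tau n k nu (int j))) - int (conj mu (tau n k nu (if j = 1 then int n else int j - 1)))
      + (if j = k then int (conj mu 1) else 0)"
  proof (cases "b = n")
    case True
    then have "j = k" using bn by simp
    then show ?thesis using main True mun n0 unfolding a_def b_def JM_def by auto
  next
    case False
    then have "j \<noteq> k" "b \<le> n - 1" using bn b by auto
    then show ?thesis using main unfolding a_def b_def JM_def by auto
  qed
qed

end
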